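(* For all $u\in C_c^\infty(0,\infty)$, $$\int_0^\infty\frac{u'(r)^2}{\sinh^2r}dr\ge\frac94\int_0^\infty\frac{u(r)^2}{\sinh^4r}dr+\int_0^\infty\frac{u(r)^2}{\sinh^2r}dr.$$ *)

theory Defs
  imports "HOL-Analysis.Analysis"
begin

definition smooth_on :: "real set \<Rightarrow> (real \<Rightarrow> real) \<Rightarrow> bool" where
  "smooth_on S u \<longleftrightarrow> (\<forall>k. ((deriv ^^ k) u) differentiable_on S)"

definition Cc_infty_pos :: "(real \<Rightarrow> real) \<Rightarrow> bool" where
  "Cc_infty_pos u \<longleftrightarrow> smooth_on {0<..} u \<and>
     (\<exists>a b. 0 < a \<and> a \<le> b \<and> (\<forall>x. x \<notin> {a..b} \<longrightarrow> u x = 0))"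

end

theory Submission
  imports Defs
begin

lemma alg6:
  fixes S C u v :: real
  assumes "S > 0" "C > 0" "C^2 = 1 + S^2"
  shows "v^2/S^2 - 9/4 * u^2/S^4 - u^2/S^2 - ((3/2 * (S^2-3 * C^2)/S^4 + 1/2 * (C^2+S^2)/(S^2 * C^2))  *  u^2 + 2 * (3/2 * C/S^3 - 1/2/(S * C)) * u * v)
   = (v - (3/2 * C/S - 1/2 * S/C) * u)^2/S^2 + 3/4 * (1/S^2-1/C^2) * u^2"
proof -
  have S: "S \<noteq> 0" "C \<noteq> 0" using assms by auto
  have e: "C^2 = 1 + S^2" by fact
  show ?thesis
    apply (simp add: field_simps S)
    apply (simp add: power2_eq_square power4_eq_xxxx algebra_simps)
    using e unfolding power2_eq_square by algebra
qed

lemma alg6_nonneg: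
  fixes S C u v :: real
  assumes "S > 0" "C > 0" "C^2 = 1 + S^2"
  shows "0 \<le> v^2/S^2 - 9/4 * u^2/S^4 - u^2/S^2 - ((3/2 * (S^2-3 * C^2)/S^4 + 1/2 * (C^2+S^2)/(S^2 * C^2))  *  u^2 + 2 * (3/2 * C/S^3 - 1/2/(S * C)) * u * v)"
proof -
  have "S^2 \<le> C^2" using assms by simp
  moreover have "0 < S^2 * C^2" using assms(1,2) by simp
  ultimately have "1/C^2 \<le> 1/S^2" by (intro divide_left_mono) (auto simp: mult.commute)
  hence "0 \<le> (v - (3/2 * C/S - 1/2 * S/C) * u)^2/S^2 + 3/4 * (1/S^2-1/C^2) * u^2"
    by (intro add_nonneg_nonneg) auto
  thus ?thesis using alg6[OF assms] by simp
qed

lemma hderiv: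
  assumes "r > 0"
  shows "((\<lambda>r. 3/2 * cosh r / sinh r ^3 - 1/2/(sinh r * cosh r)) has_real_derivative
   (3/2 * ((sinh r)^2-3 * (cosh r)^2)/(sinh r)^4 + 1/2 * ((cosh r)^2+(sinh r)^2)/((sinh r)^2 * (cosh r)^2))) (at r)"
proof -
  have s: "sinh r > 0" using assms by simp
  have c: "cosh r > 0" by simp
  show ?thesis
    using assms apply -
    apply (rule derivative_eq_intros refl | simp)+
    using s c apply (simp add: field_simps power2_eq_square)
    by algebra
qed

theorem lemma6p1:
  fixes u :: "real \<Rightarrow> real"
  assumes "Cc_infty_pos u"
  shows "integral {0<..} (\<lambda>r. (deriv u r)^2 / (sinh r)^2)
           \<ge> 9/4 * integral {0<..} (\<lambda>r. (u r)^2 / (sinh r)^4)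
             + integral {0<..} (\<lambda>r. (u r)^2 / (sinh r)^2)"
proof -
  obtain a b where ab: "0 < a" "a \<le> b" and z: "\<And>x. x \<notin> {a..b} \<Longrightarrow> u x = 0"
    using assms unfolding Cc_infty_pos_def by blast
  have sm: "smooth_on {0<..} u" using assms unfolding Cc_infty_pos_def by blast
  have d0: "u differentiable_on {0<..}" using sm unfolding smooth_on_def
    by (metis funpow_0)
  have d1: "deriv u differentiable_on {0<..}" using sm unfolding smooth_on_def
    by (metis funpow_0 funpow_Suc_right comp_apply One_nat_def)
  have dv: "(u has_real_derivative deriv u x) (at x)" if "x > 0" for x
  proof -
    have "u differentiable at x"
      using d0 that by (metis differentiable_on_eq_differentiable_at open_greaterThan greaterThan_iff)
    thus ?thesis by (simp add: DERIV_deriv_iff_real_differentiable)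
  qed
  have cu: "continuous_on {0<..} u" using d0 differentiable_imp_continuous_on by blast
  have cdu: "continuous_on {0<..} (deriv u)" using d1 differentiable_imp_continuous_on by blast
  have dz: "deriv u x = 0" if "x \<notin> {a..b}" for x
  proof -
    have "eventually (\<lambda>y. u y = 0) (nhds x)"
    proof (cases "x < a")
      case True
      have "eventually (\<lambda>y. y \<in> {..<a}) (nhds x)"
        using True by (intro eventually_nhds_in_open) auto
      thus ?thesis by eventually_elim (use z in auto)
    next
      case False
      hence "x > b" using that by auto
      have "eventually (\<lambda>y. y \<in> {b<..}) (nhds x)"
        using \<open>x > b\<close> by (intro eventually_nhds_in_open) auto
      thus ?thesis by eventually_elim (use z in auto)
    qed
    hence "deriv u x = deriv (\<lambda>_. 0) x" by (rule deriv_cong_ev) simp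
    thus ?thesis by simp
  qed
  define A where "A = a/2"
  define B where "B = b+1"
  have AB: "0 < A" "A \<le> B" "{a..b} \<subseteq> {A..B}" "{A..B} \<subseteq> {0<..}"
    using ab by (auto simp: A_def B_def)
  have uA: "u A = 0" "u B = 0" using z ab by (auto simp: A_def B_def)
  have pos: "r > 0" if "r \<in> {A..B}" for r using that AB by auto
  have cu': "continuous_on {A..B} u" using continuous_on_subset[OF cu AB(4)] .
  have cdu': "continuous_on {A..B} (deriv u)" using continuous_on_subset[OF cdu AB(4)] .
  have sne: "\<forall>r\<in>{A..B}. sinh r \<noteq> 0"
  proof
    fix r assume "r \<in> {A..B}" hence "r > 0" by (rule pos) thus "sinh r \<noteq> 0" by simp
  qed
  define f1 where "f1 = (\<lambda>r. (deriv u r)^2 / (sinh r)^2)"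
  define f2 where "f2 = (\<lambda>r. (u r)^2 / (sinh r)^4)"
  define f3 where "f3 = (\<lambda>r. (u r)^2 / (sinh r)^2)"
  have c1: "continuous_on {A..B} f1" unfolding f1_def
    using sne by (intro continuous_intros cdu') auto
  have c2: "continuous_on {A..B} f2" unfolding f2_def
    using sne by (intro continuous_intros cu') auto
  have c3: "continuous_on {A..B} f3" unfolding f3_def
    using sne by (intro continuous_intros cu') auto
  have i1: "(f1 has_integral integral {A..B} f1) {A..B}"
    using integrable_continuous_interval[OF c1] by blast
  have i2: "(f2 has_integral integral {A..B} f2) {A..B}"
    using integrable_continuous_interval[OF c2] by blast
  have i3: "(f3 has_integral integral {A..B} f3) {A..B}"
    using integrable_continuous_interval[OF c3] by blast
  have zo: "x \<notin> {A..B} \<Longrightarrow> x \<notin> {a..b}" for x using AB(3) by blast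
  have dz': "x \<notin> {A..B} \<Longrightarrow> deriv u x = 0" for x using dz zo by blast
  have z': "x \<notin> {A..B} \<Longrightarrow> u x = 0" for x using z zo by blast
  have z1: "f1 x = 0" if "x \<notin> {A..B}" for x using dz'[OF that] by (simp add: f1_def)
  have z2: "f2 x = 0" if "x \<notin> {A..B}" for x using z'[OF that] by (simp add: f2_def)
  have z3: "f3 x = 0" if "x \<notin> {A..B}" for x using z'[OF that] by (simp add: f3_def)
  have e1: "integral {0<..} f1 = integral {A..B} f1"
    by (rule integral_unique, rule has_integral_on_superset[OF i1 _ AB(4)])
       (rule z1)
  have e2: "integral {0<..} f2 = integral {A..B} f2"
    by (rule integral_unique, rule has_integral_on_superset[OF i2 _ AB(4)])
       (rule z2)
  have e3: "integral {0<..} f3 = integral {A..B} f3"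
    by (rule integral_unique, rule has_integral_on_superset[OF i3 _ AB(4)])
       (rule z3)
  define h where "h = (\<lambda>r::real. 3/2 * cosh r / sinh r ^3 - 1/2/(sinh r * cosh r))"
  define hp where "hp = (\<lambda>r::real. 3/2 * ((sinh r)^2-3 * (cosh r)^2)/(sinh r)^4 + 1/2 * ((cosh r)^2+(sinh r)^2)/((sinh r)^2 * (cosh r)^2))"
  define F' where "F' = (\<lambda>r. hp r * (u r)^2 + 2 * h r * u r * deriv u r)"
  have Fd: "((\<lambda>r. h r * (u r)^2) has_real_derivative F' r) (at r)" if "r > 0" for r
  proof -
    have "(h has_real_derivative hp r) (at r)" unfolding h_def hp_def using hderiv[OF that] .
    from DERIV_mult[OF this DERIV_power[OF dv[OF that], of 2]]
    show ?thesis unfolding F'_def by (simp add: algebra_simps)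
  qed
  have iF: "(F' has_integral (h B * (u B)^2 - h A * (u A)^2)) {A..B}"
  proof (rule fundamental_theorem_of_calculus[OF AB(2)])
    fix x assume "x \<in> {A..B}"
    hence "x > 0" by (rule pos)
    from Fd[OF this] show "((\<lambda>r. h r * (u r)^2) has_vector_derivative F' x) (at x within {A..B})"
      by (simp add: has_real_derivative_iff_has_vector_derivative[symmetric] has_field_derivative_at_within)
  qed
  hence iF0: "(F' has_integral 0) {A..B}" using uA by simp
  have iD: "((\<lambda>r. f1 r - 9/4 * f2 r - f3 r - F' r) has_integral
      (integral {A..B} f1 - 9/4 * integral {A..B} f2 - integral {A..B} f3 - 0)) {A..B}"
    by (intro has_integral_diff has_integral_mult_right i1 i2 i3 iF0)
  have "0 \<le> integral {A..B} f1 - 9/4 * integral {A..B} f2 - integral {A..B} f3 - 0"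
  proof (rule has_integral_nonneg[OF iD])
    fix r assume "r \<in> {A..B}"
    hence r: "r > 0" by (rule pos)
    show "0 \<le> f1 r - 9/4 * f2 r - f3 r - F' r"
      unfolding f1_def f2_def f3_def F'_def h_def hp_def
      using alg6_nonneg[where S="sinh r" and C="cosh r" and u="u r" and v="deriv u r"] r
      by (simp add: cosh_square_eq)
  qed
  thus ?thesis using e1 e2 e3 unfolding f1_def f2_def f3_def by simp
qed

end
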